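(* Let $n\in\omega$ and let $\mathcal{M}$ be a structure with exactly $n$ elements. Then ${\rm ar}({\rm Th}(\mathcal{M}))\leq n$.
   Context: All theories are complete first-order theories. For $n\geq 1$, a formula $\varphi(\overline{x})$ of a theory $T$ is $n$-ary if it is $T$-equivalent to a Boolean combination of $T$-formulas each of which has at most $n$ free variables; for $n=0$, $\varphi(\overline{x})$ is $0$-ary if it is $T$-equivalent to a sentence. A theory $T$ is unary ($1$-ary) if every $T$-formula is $T$-equivalent to a Boolean combination of $T$-formulas with one free variable and formulas of the form $x\approx y$; for $n\geq 2$, $T$ is $n$-ary if every $T$-formula is $n$-ary. The arity ${\rm ar}(T)$ is the natural number $n$ such that $T$ is $n$-ary and not $(n-1)$-ary; if $T$ is $n$-ary for no $n$, ${\rm ar}(T)=\infty$. *)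

theory Defs
  imports Main "HOL-Library.Extended_Nat"
begin

datatype 'f trm = Var nat | Fn 'f "'f trm list"

datatype ('f, 'r) fm =
    FBot
  | FEq "'f trm" "'f trm"
  | FRel 'r "'f trm list"
  | FNeg "('f, 'r) fm"
  | FConj "('f, 'r) fm" "('f, 'r) fm"
  | FEx nat "('f, 'r) fm"

fun fvt :: "'f trm \<Rightarrow> nat set" where
  "fvt (Var i) = {i}"
| "fvt (Fn f ts) = (\<Union>t\<in>set ts. fvt t)"

fun fv :: "('f, 'r) fm \<Rightarrow> nat set" where
  "fv FBot = {}"
| "fv (FEq s t) = fvt s \<union> fvt t"
| "fv (FRel r ts) = (\<Union>t\<in>set ts. fvt t)"
| "fv (FNeg p) = fv p"
| "fv (FConj p q) = fv p \<union> fv q"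
| "fv (FEx x p) = fv p - {x}"

record ('a, 'f, 'r) struct =
  univ :: "'a set"
  funs :: "'f \<Rightarrow> 'a list \<Rightarrow> 'a"
  rels :: "'r \<Rightarrow> 'a list \<Rightarrow> bool"

definition is_struct :: "('a, 'f, 'r) struct \<Rightarrow> bool" where
  "is_struct M \<longleftrightarrow> univ M \<noteq> {} \<and>
     (\<forall>f xs. set xs \<subseteq> univ M \<longrightarrow> funs M f xs \<in> univ M)"

fun evalt :: "('a, 'f, 'r) struct \<Rightarrow> (nat \<Rightarrow> 'a) \<Rightarrow> 'f trm \<Rightarrow> 'a" where
  "evalt M v (Var i) = v i"
| "evalt M v (Fn f ts) = funs M f (map (evalt M v) ts)"

fun sat :: "('a, 'f, 'r) struct \<Rightarrow> (nat \<Rightarrow> 'a) \<Rightarrow> ('f, 'r) fm \<Rightarrow> bool" where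
  "sat M v FBot = False"
| "sat M v (FEq s t) = (evalt M v s = evalt M v t)"
| "sat M v (FRel r ts) = rels M r (map (evalt M v) ts)"
| "sat M v (FNeg p) = (\<not> sat M v p)"
| "sat M v (FConj p q) = (sat M v p \<and> sat M v q)"
| "sat M v (FEx x p) = (\<exists>a\<in>univ M. sat M (v(x := a)) p)"

text \<open>Equivalence modulo the complete theory Th(M): Th(M) proves the universal closure
  of the biconditional iff the biconditional holds in M under every assignment.\<close>
definition th_equiv :: "('a, 'f, 'r) struct \<Rightarrow> ('f, 'r) fm \<Rightarrow> ('f, 'r) fm \<Rightarrow> bool" where
  "th_equiv M p q \<longleftrightarrow> (\<forall>v. range v \<subseteq> univ M \<longrightarrow> (sat M v p \<longleftrightarrow> sat M v q))"

inductive_set bcomb :: "('f, 'r) fm set \<Rightarrow> ('f, 'r) fm set" for S where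
  base: "p \<in> S \<Longrightarrow> p \<in> bcomb S"
| bot: "FBot \<in> bcomb S"
| neg: "p \<in> bcomb S \<Longrightarrow> FNeg p \<in> bcomb S"
| conj: "p \<in> bcomb S \<Longrightarrow> q \<in> bcomb S \<Longrightarrow> FConj p q \<in> bcomb S"

text \<open>Th(M) is n-ary. For n = 1 this is unariness; for n = 0 the notion is not defined for
  theories, so we set it to False (so that ar(T) = 1 iff T is unary).\<close>
definition th_nary :: "('a, 'f, 'r) struct \<Rightarrow> nat \<Rightarrow> bool" where
  "th_nary M n \<longleftrightarrow>
     (if n = 0 then False
      else if n = 1 then
        (\<forall>p. \<exists>q \<in> bcomb ({p. card (fv p) \<le> 1} \<union> {FEq (Var i) (Var j) | i j. True}).
               th_equiv M p q)
      else
        (\<forall>p. \<exists>q \<in> bcomb {p. card (fv p) \<le> n}. th_equiv M p q))"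

definition th_arity :: "('a, 'f, 'r) struct \<Rightarrow> enat" where
  "th_arity M = (if \<exists>n. th_nary M n
                 then enat (THE n. th_nary M n \<and> \<not> th_nary M (n - 1))
                 else \<infinity>)"

end

theory Submission
  imports Defs
begin

lemma finite_fvt: "finite (fvt t)"
  by (induction t) auto

lemma finite_fv: "finite (fv p)"
  by (induction p) (auto simp: finite_fvt)

lemma bcomb_mono: "x \<in> bcomb A \<Longrightarrow> A \<subseteq> B \<Longrightarrow> x \<in> bcomb B"
  by (induction rule: bcomb.induct) (auto intro: bcomb.intros)

lemma disj_ex:
  assumes "finite I" "\<forall>i\<in>I. \<phi> i \<in> bcomb S"
  shows "\<exists>\<psi>\<in>bcomb S. \<forall>v. sat M v \<psi> \<longleftrightarrow> (\<exists>i\<in>I. sat M v (\<phi> i))"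
  using assms
proof (induction rule: finite_induct)
  case empty
  then show ?case by (intro bexI[of _ FBot]) (auto intro: bcomb.intros)
next
  case (insert x F)
  then obtain \<psi> where "\<psi> \<in> bcomb S" "\<forall>v. sat M v \<psi> \<longleftrightarrow> (\<exists>i\<in>F. sat M v (\<phi> i))" by auto
  then show ?case using insert
    by (intro bexI[of _ "FNeg (FConj (FNeg (\<phi> x)) (FNeg \<psi>))"]) (auto intro: bcomb.intros)
qed

lemma main:
  assumes "finite (univ M)" "card (univ M) = n"
    and S1: "\<And>p. card (fv p) \<le> n \<Longrightarrow> p \<in> S"
    and S2: "\<And>i j. FEq (Var i) (Var j) \<in> S"
  shows "\<exists>q\<in>bcomb S. th_equiv M p q"
proof (induction "card (fv p)" arbitrary: p rule: less_induct)
  case less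
  show ?case
  proof (cases "card (fv p) \<le> n")
    case True
    then show ?thesis by (intro bexI[of _ p]) (auto simp: th_equiv_def intro: bcomb.base S1)
  next
    case False
    define F where "F = fv p"
    define I where "I = {(i,j). i\<in>F \<and> j\<in>F \<and> i\<noteq>j}"
    define Q where "Q = (\<lambda>(i,j). FEx j (FConj (FEq (Var j) (Var i)) p))"
    have fF: "finite F" unfolding F_def by (rule finite_fv)
    have fI: "finite I"
      by (rule finite_subset[of _ "F \<times> F"]) (auto simp: I_def fF)
    have "\<forall>ij\<in>I. \<exists>r. r \<in> bcomb S \<and> th_equiv M (Q ij) r"
    proof
      fix ij assume "ij \<in> I"
      then obtain i j where ij: "ij = (i,j)" "i \<in> F" "j \<in> F" "i \<noteq> j" unfolding I_def by auto
      have "fv (Q ij) = F - {j}" using ij unfolding Q_def F_def by auto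
      moreover have "card (F - {j}) < card F" using fF ij(3) by (rule card_Diff1_less)
      ultimately have "card (fv (Q ij)) < card (fv p)" unfolding F_def by simp
      hence "\<exists>r\<in>bcomb S. th_equiv M (Q ij) r" by (rule less)
      then show "\<exists>r. r \<in> bcomb S \<and> th_equiv M (Q ij) r" by blast
    qed
    from bchoice[OF this] obtain R where R: "\<forall>ij\<in>I. R ij \<in> bcomb S \<and> th_equiv M (Q ij) (R ij)"
      by blast
    define \<phi> where "\<phi> = (\<lambda>(i,j). FConj (FEq (Var i) (Var j)) (R (i,j)))"
    have "\<forall>ij\<in>I. \<phi> ij \<in> bcomb S"
    proof
      fix ij assume ijI: "ij \<in> I"
      obtain i j where ij: "ij = (i,j)" by (cases ij)
      have "R (i,j) \<in> bcomb S" using R ijI ij by blast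
      then show "\<phi> ij \<in> bcomb S" unfolding ij \<phi>_def
        by (simp add: bcomb.conj bcomb.base S2)
    qed
    then obtain \<psi> where \<psi>: "\<psi> \<in> bcomb S" "\<forall>v. sat M v \<psi> \<longleftrightarrow> (\<exists>i\<in>I. sat M v (\<phi> i))"
      using disj_ex[OF fI] by blast
    show ?thesis
    proof (rule bexI[OF _ \<psi>(1)], unfold th_equiv_def, intro allI impI)
      fix v :: "nat \<Rightarrow> 'a" assume rv: "range v \<subseteq> univ M"
      have key: "sat M v (R (i,j)) \<longleftrightarrow> sat M v p" if "(i,j) \<in> I" "v i = v j" for i j
      proof -
        have ne: "i \<noteq> j" using that unfolding I_def by auto
        have te: "th_equiv M (Q (i,j)) (R (i,j))" using R that(1) by blast
        have "sat M v (R (i,j)) \<longleftrightarrow> sat M v (Q (i,j))"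
          using te rv unfolding th_equiv_def by blast
        also have "\<dots> \<longleftrightarrow> (\<exists>a\<in>univ M. a = v i \<and> sat M (v(j:=a)) p)"
          using ne by (auto simp: Q_def)
        also have "\<dots> \<longleftrightarrow> sat M (v(j:=v i)) p"
        proof -
          have "v i \<in> univ M" using rv by auto
          thus ?thesis by metis
        qed
        also have "v(j:=v i) = v" by (metis fun_upd_triv that(2))
        finally show ?thesis .
      qed
      have "\<not> inj_on v F"
      proof
        assume "inj_on v F"
        hence "card (v ` F) = card F" by (rule card_image)
        moreover have "card (v ` F) \<le> card (univ M)"
          using rv assms(1) by (intro card_mono) auto
        ultimately show False using False assms(2) unfolding F_def by simp
      qed
      then obtain i j where ij: "i \<in> F" "j \<in> F" "i \<noteq> j" "v i = v j"
        unfolding inj_on_def by blast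
      hence ijI: "(i,j) \<in> I" unfolding I_def by auto
      show "sat M v p \<longleftrightarrow> sat M v \<psi>"
      proof
        assume "sat M v p"
        hence "sat M v (\<phi> (i,j))" using key[OF ijI ij(4)] ij(4) by (simp add: \<phi>_def)
        thus "sat M v \<psi>" using \<psi>(2) ijI by blast
      next
        assume "sat M v \<psi>"
        then obtain ij' where "ij' \<in> I" "sat M v (\<phi> ij')" using \<psi>(2) by blast
        then obtain a b where "ij' = (a,b)" "(a,b) \<in> I" "v a = v b" "sat M v (R (a,b))"
          by (cases ij') (auto simp: \<phi>_def)
        thus "sat M v p" using key by blast
      qed
    qed
  qed
qed

lemma nary_suc: fixes M :: "('a,'f,'r) struct" shows "th_nary M a \<Longrightarrow> th_nary M (Suc a)"
proof -
  assume h: "th_nary M a"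
  show ?thesis
  proof (cases "a = 1")
    case True
    have sub: "{p. card (fv p) \<le> 1} \<union> {FEq (Var i) (Var j) | i j. True}
        \<subseteq> {p::('f,'r) fm. card (fv p) \<le> 2}"
    proof
      fix p :: "('f,'r) fm" assume "p \<in> {p. card (fv p) \<le> 1} \<union> {FEq (Var i) (Var j) | i j. True}"
      then show "p \<in> {p. card (fv p) \<le> 2}"
      proof
        assume "p \<in> {p. card (fv p) \<le> 1}" thus ?thesis by auto
      next
        assume "p \<in> {FEq (Var i) (Var j) | i j. True}"
        then obtain i j where "p = FEq (Var i) (Var j)" by auto
        thus ?thesis by (simp add: card_insert_if)
      qed
    qed
    have h1: "\<forall>p. \<exists>q\<in>bcomb ({p. card (fv p) \<le> 1} \<union> {FEq (Var i) (Var j) | i j. True}). th_equiv M p q"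
      using h True by (simp add: th_nary_def)
    have "\<forall>p. \<exists>q\<in>bcomb {p::('f,'r) fm. card (fv p) \<le> 2}. th_equiv M p q"
      using h1 bcomb_mono[OF _ sub] by blast
    moreover have "Suc a = 2" using True by simp
    ultimately show ?thesis unfolding th_nary_def by (simp add: numeral_2_eq_2)
  next
    case False
    hence "a \<ge> 2" using h unfolding th_nary_def by (auto split: if_splits)
    have sub: "{p::('f,'r) fm. card (fv p) \<le> a} \<subseteq> {p. card (fv p) \<le> Suc a}" by auto
    have h1: "\<forall>p. \<exists>q\<in>bcomb {p::('f,'r) fm. card (fv p) \<le> a}. th_equiv M p q"
      using h \<open>a \<ge> 2\<close> by (simp add: th_nary_def)
    have "\<forall>p. \<exists>q\<in>bcomb {p::('f,'r) fm. card (fv p) \<le> Suc a}. th_equiv M p q"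
      using h1 bcomb_mono[OF _ sub] by blast
    thus ?thesis using \<open>a \<ge> 2\<close> by (simp add: th_nary_def)
  qed
qed

lemma nary_add: "th_nary M a \<Longrightarrow> th_nary M (a + k)"
  by (induction k) (auto intro: nary_suc)

lemma nary_mono: "th_nary M a \<Longrightarrow> a \<le> b \<Longrightarrow> th_nary M b"
  using nary_add[of M a "b - a"] by auto

theorem proposition1p4:
  fixes M :: "('a, 'f, 'r) struct" and n :: nat
  assumes "is_struct M"
    and "finite (univ M)"
    and "card (univ M) = n"
  shows "th_arity M \<le> enat n"
proof -
  have n1: "n \<ge> 1" using assms unfolding is_struct_def
    by (metis One_nat_def Suc_leI card_gt_0_iff)
  have nn: "th_nary M n"
  proof (cases "n = 1")
    case True
    have "\<forall>p. \<exists>q\<in>bcomb ({p. card (fv p) \<le> 1} \<union> {FEq (Var i) (Var j) | i j. True}). th_equiv M p q"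
    proof
      fix p :: "('f,'r) fm"
      show "\<exists>q\<in>bcomb ({p. card (fv p) \<le> 1} \<union> {FEq (Var i) (Var j) | i j. True}). th_equiv M p q"
        by (rule main[OF assms(2,3)]) (use True in auto)
    qed
    thus ?thesis using True by (simp add: th_nary_def)
  next
    case False
    have "\<And>i j. card (fv (FEq (Var i) (Var j) :: ('f,'r) fm)) \<le> n"
      using False n1 by (simp add: card_insert_if)
    hence "\<forall>p. \<exists>q\<in>bcomb {p::('f,'r) fm. card (fv p) \<le> n}. th_equiv M p q"
      by (auto intro!: main[OF assms(2,3)])
    thus ?thesis using False n1 by (simp add: th_nary_def)
  qed
  define m where "m = (LEAST k. th_nary M k)"
  have m: "th_nary M m" unfolding m_def by (rule LeastI[of "th_nary M", OF nn])
  have mn: "m \<le> n" unfolding m_def by (rule Least_le[of "th_nary M", OF nn])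
  have m0: "m \<noteq> 0" using m unfolding th_nary_def by (auto split: if_splits)
  have nm: "\<not> th_nary M (m - 1)"
    using m0 not_less_Least[of "m - 1" "th_nary M"] unfolding m_def by auto
  have the: "(THE k. th_nary M k \<and> \<not> th_nary M (k - 1)) = m"
  proof (rule the_equality)
    show "th_nary M m \<and> \<not> th_nary M (m - 1)" using m nm by auto
  next
    fix k assume k: "th_nary M k \<and> \<not> th_nary M (k - 1)"
    have "m \<le> k" unfolding m_def using k by (auto intro: Least_le)
    show "k = m"
    proof (rule ccontr)
      assume "k \<noteq> m"
      hence "m \<le> k - 1" using \<open>m \<le> k\<close> by auto
      thus False using nary_mono[OF m] k by blast
    qed
  qed
  show ?thesis unfolding th_arity_def using nn the mn by auto
qed

end
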